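(* Let $M=(X,rk)$ be a matroid on a finite ground set $X$ with rank $r=rk(X)$. Then for every integer $i$ with $i>r-d_2(M)$, \[[x^i]T_M(x,1)=\binom{|X|-i-1}{r-i}-\sum_{\substack{C\in \mathcal{C}(M),\\ |C|<d_2(M)}} \binom{|X|-|C|-i-1}{|X|-r-1}.\]
   Context: $T_M(x,y)=\sum_{A\subseteq X}(x-1)^{r-rk(A)}(y-1)^{|A|-rk(A)}$ is the Tutte polynomial of $M$, and $[x^i]f(x)$ denotes the coefficient of $x^i$. A circuit of $M$ is a set $C\subseteq X$ with $rk(C\setminus\{e\})=|C|-1=rk(C)$ for all $e\in C$; $\mathcal{C}(M)$ is the set of all circuits. Let $\mathcal{D}(M)=\{A\subseteq X: rk(A\setminus\{e\})=rk(A)\text{ for every } e\in A\}$ and, for $k\ge1$, $d_k(M)=\min\{|A|: A\in\mathcal{D}(M),\ rk(A)=|A|-k\}$. *)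

theory Defs
  imports "HOL-Computational_Algebra.Polynomial"
begin

definition matroid :: "'a set \<Rightarrow> ('a set \<Rightarrow> nat) \<Rightarrow> bool" where
  "matroid X rk \<longleftrightarrow> finite X
     \<and> (\<forall>A. A \<subseteq> X \<longrightarrow> rk A \<le> card A)
     \<and> (\<forall>A B. A \<subseteq> B \<and> B \<subseteq> X \<longrightarrow> rk A \<le> rk B)
     \<and> (\<forall>A B. A \<subseteq> X \<and> B \<subseteq> X \<longrightarrow> rk (A \<union> B) + rk (A \<inter> B) \<le> rk A + rk B)"

text \<open>Tutte polynomial as a polynomial in x whose coefficients are polynomials in y.\<close>
definition tutte :: "'a set \<Rightarrow> ('a set \<Rightarrow> nat) \<Rightarrow> int poly poly" where
  "tutte X rk = (\<Sum>A\<in>Pow X.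
      [:[:-1:], 1:] ^ (rk X - rk A) * [: [:-1, 1:] ^ (card A - rk A) :])"

definition tutte_x1 :: "'a set \<Rightarrow> ('a set \<Rightarrow> nat) \<Rightarrow> int poly" where
  "tutte_x1 X rk = map_poly (\<lambda>q. poly q 1) (tutte X rk)"

definition circuits :: "'a set \<Rightarrow> ('a set \<Rightarrow> nat) \<Rightarrow> 'a set set" where
  "circuits X rk = {C. C \<subseteq> X \<and> C \<noteq> {} \<and> rk C = card C - 1
      \<and> (\<forall>e\<in>C. rk (C - {e}) = card C - 1)}"

definition Dsets :: "'a set \<Rightarrow> ('a set \<Rightarrow> nat) \<Rightarrow> 'a set set" where
  "Dsets X rk = {A. A \<subseteq> X \<and> (\<forall>e\<in>A. rk (A - {e}) = rk A)}"

definition dk :: "'a set \<Rightarrow> ('a set \<Rightarrow> nat) \<Rightarrow> nat \<Rightarrow> nat" where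
  "dk X rk k = Min {card A | A. A \<in> Dsets X rk \<and> rk A + k = card A}"

definition binom :: "int \<Rightarrow> int \<Rightarrow> int" where
  "binom n k = (if 0 \<le> k \<and> k \<le> n then int (nat n choose nat k) else 0)"

end

theory Submission
  imports Defs
begin


lemma coeff_lin_pow: "coeff ([:a, 1:] ^ k) i = of_nat (k choose i) * (a::'b::comm_semiring_1) ^ (k - i)"
proof (cases "i \<le> k")
  case True then show ?thesis using coeff_linear_poly_power[OF True, of a 1] by simp
next
  case False
  have "degree ([:a, 1:] ^ k) \<le> k"
    by (rule order.trans[OF degree_power_le]) simp
  then show ?thesis using False by (simp add: coeff_eq_0 binomial_eq_0)
qed

definition cf :: "nat \<Rightarrow> nat \<Rightarrow> int" where
  "cf k i = int (k choose i) * (-1) ^ (k - i)"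

lemma coeff_tutte_x1:
  assumes M: "matroid X rk"
  shows "coeff (tutte_x1 X rk) i = (\<Sum>A\<in>Pow X. if rk A = card A then cf (rk X - rk A) i else 0)"
proof -
  have "coeff (tutte_x1 X rk) i = poly (coeff (tutte X rk) i) 1"
    unfolding tutte_x1_def by (simp add: coeff_map_poly)
  also have "coeff (tutte X rk) i = (\<Sum>A\<in>Pow X. of_nat ((rk X - rk A) choose i) * [:-1:] ^ (rk X - rk A - i)
     * [:-1, 1:] ^ (card A - rk A))"
    unfolding tutte_def coeff_sum by (simp add: coeff_lin_pow mult.commute)
  also have "poly \<dots> 1 = (\<Sum>A\<in>Pow X. if rk A = card A then cf (rk X - rk A) i else 0)"
    unfolding poly_sum
    apply (rule sum.cong, simp)
    using M unfolding matroid_def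
    apply (auto simp add: poly_power cf_def of_nat_poly)
    done
  finally show ?thesis .
qed


lemma ident_poly:
  assumes "R < N"
  shows "coeff (\<Sum>k\<le>R. smult (int (N choose k)) ([:-1,1:]^(R-k))) t
         = (if t \<le> R then int ((N-1-t) choose (R-t)) else 0)"
  using assms
proof (induction R arbitrary: t)
  case 0
  then show ?case by (cases t) auto
next
  case (Suc R)
  let ?P = "[:-1,1::int:]"
  let ?S = "\<lambda>R. (\<Sum>k\<le>R. smult (int (N choose k)) (?P^(R-k)))"
  have "?S (Suc R) = (\<Sum>k\<le>R. smult (int (N choose k)) (?P^(Suc R-k))) + [:int (N choose Suc R):]"
    by (simp add: sum.atMost_Suc)
  also have "(\<Sum>k\<le>R. smult (int (N choose k)) (?P^(Suc R-k))) = ?P * ?S R"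
    unfolding sum_distrib_left
    by (rule sum.cong) (auto simp: Suc_diff_le)
  finally have eq: "?S (Suc R) = ?P * ?S R + [:int (N choose Suc R):]" .
  have IH: "\<And>t. coeff (?S R) t = (if t \<le> R then int ((N-1-t) choose (R-t)) else 0)"
    using Suc by simp
  obtain N' where N': "N = Suc N'" using Suc.prems by (cases N) auto
  show ?case
  proof (cases t)
    case 0
    have "coeff (?S (Suc R)) 0 = - coeff (?S R) 0 + int (N choose Suc R)"
      unfolding eq by simp
    also have "\<dots> = - int ((N-1) choose R) + int (N choose Suc R)" unfolding IH by simp
    also have "\<dots> = int ((N-1) choose Suc R)" unfolding N' by simp
    finally show ?thesis using 0 by simp
  next
    case (Suc t')
    have c: "coeff (?S (Suc R)) t = coeff (?S R) t' - coeff (?S R) t"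
      unfolding eq Suc by simp
    show ?thesis
    proof (cases "t' < R")
      case True
      define a where "a = N - 2 - t'"
      define b where "b = R - 1 - t'"
      have a: "N - 1 - t' = Suc a" using Suc.prems True unfolding a_def by arith
      have b: "R - t' = Suc b" using True unfolding b_def by arith
      have "N - 1 - t = a" using a Suc by simp
      moreover have "R - t = b" using b Suc by simp
      moreover have "Suc R - t = R - t'" using Suc by simp
      ultimately have "coeff (?S (Suc R)) t = int (Suc a choose Suc b) - int (a choose b)"
        unfolding c IH using True Suc a b by simp
      also have "\<dots> = int (a choose Suc b)" by simp
      finally show ?thesis using True Suc \<open>N - 1 - t = a\<close> \<open>Suc R - t = R - t'\<close> b by simp
    next
      case False
      have "coeff (?S (Suc R)) t = (if t' \<le> R then int ((N-1-t') choose (R-t')) else 0)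
          - (if t \<le> R then int ((N-1-t) choose (R-t)) else 0)"
        unfolding c IH by (rule refl)
      then show ?thesis using False Suc by auto
    qed
  qed
qed



lemma sum_pow_card:
  assumes "finite Y"
  shows "(\<Sum>B\<in>Pow Y. (h (card B)::int)) = (\<Sum>k\<le>card Y. int (card Y choose k) * h k)"
proof -
  have "(\<Sum>B\<in>Pow Y. h (card B)) = (\<Sum>k\<le>card Y. \<Sum>B\<in>{B\<in>Pow Y. card B = k}. h (card B))"
    by (rule sum.group[symmetric]) (use assms in \<open>auto intro: card_mono\<close>)
  also have "\<dots> = (\<Sum>k\<le>card Y. int (card Y choose k) * h k)"
  proof (rule sum.cong[OF refl])
    fix k
    have "(\<Sum>B\<in>{B\<in>Pow Y. card B = k}. h (card B)) = (\<Sum>B\<in>{B. B \<subseteq> Y \<and> card B = k}. h k)"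
      by (rule sum.cong) auto
    also have "\<dots> = int (card Y choose k) * h k"
      using n_subsets[OF assms, of k] by simp
    finally show "(\<Sum>B\<in>{B\<in>Pow Y. card B = k}. h (card B)) = int (card Y choose k) * h k" .
  qed
  finally show ?thesis .
qed

lemma subset_ident:
  assumes "finite Y" "R < card Y"
  shows "(\<Sum>B\<in>Pow Y. if card B \<le> R then cf (R - card B) i else 0)
     = (if i \<le> R then int ((card Y - 1 - i) choose (R - i)) else 0)"
proof -
  let ?N = "card Y"
  have "(\<Sum>B\<in>Pow Y. if card B \<le> R then cf (R - card B) i else 0)
     = (\<Sum>k\<le>?N. int (?N choose k) * (if k \<le> R then cf (R - k) i else 0))"
    by (rule sum_pow_card[OF assms(1)])
  also have "\<dots> = (\<Sum>k\<le>R. int (?N choose k) * cf (R - k) i)"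
  proof -
    have "(\<Sum>k\<le>?N. int (?N choose k) * (if k \<le> R then cf (R - k) i else 0))
       = (\<Sum>k\<le>R. int (?N choose k) * (if k \<le> R then cf (R - k) i else 0))"
      by (rule sum.mono_neutral_right) (use assms in auto)
    then show ?thesis by simp
  qed
  also have "\<dots> = coeff (\<Sum>k\<le>R. smult (int (?N choose k)) ([:-1,1:]^(R-k))) i"
    unfolding coeff_sum by (simp add: coeff_lin_pow cf_def)
  also have "\<dots> = (if i \<le> R then int ((?N-1-i) choose (R-i)) else 0)"
    by (rule ident_poly[OF assms(2)])
  finally show ?thesis .
qed



lemma m_fin: "matroid X rk \<Longrightarrow> finite X" unfolding matroid_def by blast
lemma m_card: "matroid X rk \<Longrightarrow> A \<subseteq> X \<Longrightarrow> rk A \<le> card A" unfolding matroid_def by blast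
lemma m_mono: "matroid X rk \<Longrightarrow> A \<subseteq> B \<Longrightarrow> B \<subseteq> X \<Longrightarrow> rk A \<le> rk B" unfolding matroid_def by blast
lemma m_sub: "matroid X rk \<Longrightarrow> A \<subseteq> X \<Longrightarrow> B \<subseteq> X \<Longrightarrow> rk (A \<union> B) + rk (A \<inter> B) \<le> rk A + rk B"
  unfolding matroid_def by blast
lemma m_empty: "matroid X rk \<Longrightarrow> rk {} = 0" using m_card[of X rk "{}"] by simp

lemma m_subadd:
  assumes M: "matroid X rk" and "A \<subseteq> X" "B \<subseteq> X"
  shows "rk (A \<union> B) \<le> rk A + card B"
  using m_sub[OF M assms(2,3)] m_card[OF M assms(3)] by linarith

lemma m_hered:
  assumes M: "matroid X rk" and I: "I \<subseteq> X" "rk I = card I" and B: "B \<subseteq> I"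
  shows "rk B = card B"
proof -
  have fI: "finite I" using m_fin[OF M] I finite_subset by blast
  have e: "I = B \<union> (I - B)" using B by blast
  have "rk (B \<union> (I - B)) \<le> rk B + card (I - B)"
    by (rule m_subadd[OF M]) (use I B in auto)
  then have "rk I \<le> rk B + card (I - B)" using e by simp
  moreover have "card (I - B) = card I - card B" using B fI by (simp add: card_Diff_subset finite_subset)
  moreover have "card B \<le> card I" using B fI by (simp add: card_mono)
  moreover have "rk B \<le> card B" using m_card[OF M] B I by blast
  ultimately show ?thesis using I by linarith
qed

lemma d2_le:
  assumes M: "matroid X rk" and D: "D \<in> Dsets X rk" "rk D + 2 = card D"
  shows "dk X rk 2 \<le> card D"
proof -
  have "{card A | A. A \<in> Dsets X rk \<and> rk A + 2 = card A} \<subseteq> card ` Pow X"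
    unfolding Dsets_def by auto
  then have "finite {card A | A. A \<in> Dsets X rk \<and> rk A + 2 = card A}"
    using m_fin[OF M] finite_subset by blast
  then show ?thesis unfolding dk_def by (rule Min_le) (use D in blast)
qed

lemma null_le1:
  assumes M: "matroid X rk" and A: "A \<subseteq> X" "card A < dk X rk 2"
  shows "card A \<le> rk A + 1"
proof (rule ccontr)
  assume "\<not> card A \<le> rk A + 1"
  then have "A \<subseteq> A \<and> rk A + 2 \<le> card A" by simp
  from ex_has_least_nat[of "\<lambda>B. B \<subseteq> A \<and> rk B + 2 \<le> card B", OF this, of card]
  obtain B where B0: "B \<subseteq> A \<and> rk B + 2 \<le> card B"
    and min0: "\<forall>B'. B' \<subseteq> A \<and> rk B' + 2 \<le> card B' \<longrightarrow> card B \<le> card B'" by (elim exE conjE) (rule that, (assumption | rule conjI)+)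
  have B: "B \<subseteq> A" "rk B + 2 \<le> card B" using B0 by simp_all
  have min: "\<And>B'. B' \<subseteq> A \<Longrightarrow> rk B' + 2 \<le> card B' \<Longrightarrow> card B \<le> card B'" using min0 by simp
  have BX: "B \<subseteq> X" using A B by blast
  have fB: "finite B" using finite_subset[OF BX m_fin[OF M]] .
  have rem: "rk (B - {e}) = rk B \<and> rk B + 2 = card B" if e: "e \<in> B" for e
  proof -
    have c: "card (B - {e}) = card B - 1" using e fB by simp
    have "card B > 0" using e fB card_gt_0_iff by blast
    then have "\<not> rk (B - {e}) + 2 \<le> card (B - {e})"
    proof (intro notI)
      assume h: "rk (B - {e}) + 2 \<le> card (B - {e})"
      have "B - {e} \<subseteq> A" using B by blast
      from min[OF this h] c \<open>card B > 0\<close> show False by linarith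
    qed
    moreover have "rk (B - {e}) \<le> rk B" using m_mono[OF M, of "B - {e}" B] BX by blast
    ultimately show ?thesis using c B by linarith
  qed
  have "B \<noteq> {}" using B(2) by (intro notI) simp
  then obtain e where "e \<in> B" by blast
  then have r2: "rk B + 2 = card B" using rem by blast
  have "\<forall>e\<in>B. rk (B - {e}) = rk B" using rem by blast
  then have "B \<in> Dsets X rk" unfolding Dsets_def using BX by simp
  then have "dk X rk 2 \<le> card B" using d2_le[OF M _ r2] by blast
  moreover have "card B \<le> card A" using card_mono[OF finite_subset[OF A(1) m_fin[OF M]] B(1)] .
  ultimately show False using A by linarith
qed

lemma dep_circuit:
  assumes M: "matroid X rk" and A: "A \<subseteq> X" "rk A < card A"
  shows "\<exists>C\<in>circuits X rk. C \<subseteq> A"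
proof -
  have "A \<subseteq> A \<and> rk A < card A" using A by simp
  from ex_has_least_nat[of "\<lambda>B. B \<subseteq> A \<and> rk B < card B", OF this, of card]
  obtain B where B0: "B \<subseteq> A \<and> rk B < card B"
    and min0: "\<forall>B'. B' \<subseteq> A \<and> rk B' < card B' \<longrightarrow> card B \<le> card B'" by (elim exE conjE) (rule that, (assumption | rule conjI)+)
  have B: "B \<subseteq> A" "rk B < card B" using B0 by simp_all
  have min: "\<And>B'. B' \<subseteq> A \<Longrightarrow> rk B' < card B' \<Longrightarrow> card B \<le> card B'" using min0 by simp
  have BX: "B \<subseteq> X" using A B by blast
  have fB: "finite B" using finite_subset[OF BX m_fin[OF M]] .
  have ne: "B \<noteq> {}" using B m_empty[OF M] by auto
  have rem: "rk (B - {e}) = card B - 1 \<and> rk B = card B - 1" if e: "e \<in> B" for e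
  proof -
    have c: "card (B - {e}) = card B - 1" using e fB by simp
    have "card B > 0" using e fB card_gt_0_iff by blast
    then have "\<not> rk (B - {e}) < card (B - {e})"
    proof (intro notI)
      assume h: "rk (B - {e}) < card (B - {e})"
      have "B - {e} \<subseteq> A" using B by blast
      from min[OF this h] c \<open>card B > 0\<close> show False by linarith
    qed
    moreover have "rk (B - {e}) \<le> rk B" using m_mono[OF M, of "B - {e}" B] BX by blast
    ultimately show ?thesis using c B by linarith
  qed
  obtain e where "e \<in> B" using ne by blast
  then have "rk B = card B - 1" using rem by blast
  moreover have "\<forall>e\<in>B. rk (B - {e}) = card B - 1" using rem by blast
  ultimately have "B \<in> circuits X rk" unfolding circuits_def using BX ne by simp
  then show ?thesis using B by blast
qed

lemma circ_dep:
  assumes M: "matroid X rk" and C: "C \<in> circuits X rk"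
  shows "rk C + 1 = card C"
proof -
  have "finite C" "C \<noteq> {}" using C m_fin[OF M] unfolding circuits_def by (auto intro: finite_subset)
  then have "card C > 0" by (simp add: card_gt_0_iff)
  then show ?thesis using C unfolding circuits_def by simp
qed

lemma indep_no_circ:
  assumes M: "matroid X rk" and A: "A \<subseteq> X" "rk A = card A" and C: "C \<in> circuits X rk" "C \<subseteq> A"
  shows False
  using m_hered[OF M A C(2)] circ_dep[OF M C(1)] by simp

lemma circ_indep_minus:
  assumes M: "matroid X rk" and C: "C \<in> circuits X rk" "B \<subseteq> C" "B \<noteq> C"
  shows "rk B = card B"
proof -
  obtain e where e: "e \<in> C" "B \<subseteq> C - {e}" using C by blast
  have fC: "finite C" using C m_fin[OF M] unfolding circuits_def by (auto intro: finite_subset)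
  have "rk (C - {e}) = card (C - {e})" using C e fC unfolding circuits_def by simp
  moreover have "C - {e} \<subseteq> X" using C unfolding circuits_def by blast
  ultimately show ?thesis using m_hered[OF M _ _ e(2)] by blast
qed

lemma two_circ:
  assumes M: "matroid X rk" and C1: "C1 \<in> circuits X rk" and C2: "C2 \<in> circuits X rk" and ne: "C1 \<noteq> C2"
  shows "rk (C1 \<union> C2) + 2 \<le> card (C1 \<union> C2)"
proof -
  have X1: "C1 \<subseteq> X" and X2: "C2 \<subseteq> X" using C1 C2 unfolding circuits_def by auto
  have f1: "finite C1" and f2: "finite C2" using X1 X2 m_fin[OF M] finite_subset by auto
  have "\<not> C1 \<subseteq> C2"
  proof
    assume "C1 \<subseteq> C2"
    then have "rk C1 = card C1" using circ_indep_minus[OF M C2, of C1] ne by blast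
    then show False using circ_dep[OF M C1] by simp
  qed
  then have "C1 \<inter> C2 \<noteq> C1" by blast
  then have i: "rk (C1 \<inter> C2) = card (C1 \<inter> C2)" using circ_indep_minus[OF M C1, of "C1 \<inter> C2"] by blast
  have "rk (C1 \<union> C2) + rk (C1 \<inter> C2) \<le> rk C1 + rk C2" using m_sub[OF M X1 X2] .
  moreover have "card (C1 \<union> C2) + card (C1 \<inter> C2) = card C1 + card C2"
    using card_Un_Int[OF f1 f2] by simp
  ultimately show ?thesis using i circ_dep[OF M C1] circ_dep[OF M C2] by linarith
qed

lemma circ_count:
  assumes M: "matroid X rk" and A: "A \<subseteq> X" "card A < dk X rk 2"
  shows "card {C\<in>circuits X rk. card C < dk X rk 2 \<and> C \<subseteq> A} = (if rk A = card A then 0 else 1)"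
proof (cases "rk A = card A")
  case True
  have E: "{C\<in>circuits X rk. card C < dk X rk 2 \<and> C \<subseteq> A} = {}"
    using indep_no_circ[OF M A(1) True] by blast
  show ?thesis unfolding E using True by simp
next
  case False
  then have "rk A < card A" using m_card[OF M A(1)] by simp
  then obtain C where C: "C \<in> circuits X rk" "C \<subseteq> A" using dep_circuit[OF M A(1)] by blast
  have fA: "finite A" using A m_fin[OF M] finite_subset by blast
  have cC: "card C < dk X rk 2" using card_mono[OF fA C(2)] A by simp
  have "{C\<in>circuits X rk. card C < dk X rk 2 \<and> C \<subseteq> A} = {C}"
  proof (rule ccontr)
    assume "{C\<in>circuits X rk. card C < dk X rk 2 \<and> C \<subseteq> A} \<noteq> {C}"
    then obtain C' where C': "C' \<in> circuits X rk" "C' \<subseteq> A" "C' \<noteq> C" using C cC by blast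
    have "rk (C \<union> C') + 2 \<le> card (C \<union> C')" using two_circ[OF M C(1) C'(1)] C'(3) by auto
    moreover have "card (C \<union> C') < dk X rk 2" using card_mono[OF fA, of "C \<union> C'"] C C' A by simp
    moreover have "C \<union> C' \<subseteq> X" using C C' A by blast
    ultimately show False using null_le1[OF M, of "C \<union> C'"] by linarith
  qed
  then show ?thesis using False by (simp only: card.empty card_insert_disjoint finite.emptyI empty_iff if_False) simp
qed



lemma binom_nat: "b \<le> a \<Longrightarrow> binom (int a) (int b) = int (a choose b)"
  unfolding binom_def by simp

lemma binom_main:
  assumes "r < n"
  shows "binom (int n - int i - 1) (int r - int i) = (if i \<le> r then int ((n-1-i) choose (r-i)) else 0)"
proof (cases "i \<le> r")
  case True
  have e1: "int n - int i - 1 = int (n-1-i)" using True assms by simp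
  have e2: "int r - int i = int (r - i)" using True by simp
  have "binom (int (n-1-i)) (int (r - i)) = int ((n-1-i) choose (r-i))"
    by (rule binom_nat) (use True assms in simp)
  then show ?thesis using True by (simp only: e1 e2 if_True simp_thms)
next
  case False
  then show ?thesis unfolding binom_def by simp
qed

lemma binom_circ:
  assumes "c \<le> r + 1" "r < n"
  shows "binom (int n - int c - int i - 1) (int n - int r - 1)
     = (if c \<le> r \<and> i \<le> r - c then int ((n-c-1-i) choose (r-c-i)) else 0)"
proof (cases "c \<le> r \<and> i \<le> r - c")
  case True
  have e1: "int n - int c - int i - 1 = int (n-c-1-i)" using True assms by arith
  have e2: "int n - int r - 1 = int (n - r - 1)" using True assms by simp
  have le: "n - r - 1 \<le> n-c-1-i" using True assms by arith
  have "(n-c-1-i) choose (n - r - 1) = (n-c-1-i) choose ((n-c-1-i) - (n - r - 1))"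
    by (rule binomial_symmetric[OF le])
  also have "(n-c-1-i) - (n - r - 1) = r - c - i" using True assms by simp
  finally have "binom (int (n-c-1-i)) (int (n - r - 1)) = int ((n-c-1-i) choose (r-c-i))"
    using binom_nat[OF le] by simp
  then show ?thesis using True by (simp only: e1 e2 if_True simp_thms)
next
  case False
  then show ?thesis unfolding binom_def using assms by auto
qed



theorem theorem3p4:
  fixes X :: "'a set" and rk :: "'a set \<Rightarrow> nat" and i :: nat
  assumes "matroid X rk"
    and "\<exists>A\<in>Dsets X rk. rk A + 2 = card A"
    and "int i > int (rk X) - int (dk X rk 2)"
  shows "coeff (tutte_x1 X rk) i =
    binom (int (card X) - int i - 1) (int (rk X) - int i)
    - (\<Sum>C\<in>{C\<in>circuits X rk. card C < dk X rk 2}.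
         binom (int (card X) - int (card C) - int i - 1) (int (card X) - int (rk X) - 1))"
proof -
  note M = assms(1)
  define r where "r = rk X"
  define n where "n = card X"
  define d where "d = dk X rk 2"
  define Circ where "Circ = {C\<in>circuits X rk. card C < d}"
  have fX: "finite X" using m_fin[OF M] .
  obtain D0 where D0: "D0 \<in> Dsets X rk" "rk D0 + 2 = card D0" using assms(2) by blast
  have D0X: "D0 \<subseteq> X" using D0 unfolding Dsets_def by blast
  have rn: "r < n"
  proof -
    have e: "X = D0 \<union> (X - D0)" using D0X by blast
    have "rk (D0 \<union> (X - D0)) \<le> rk D0 + card (X - D0)"
      by (rule m_subadd[OF M D0X]) blast
    then have "r \<le> rk D0 + card (X - D0)" unfolding r_def using e by simp
    moreover have "card (X - D0) = n - card D0" unfolding n_def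
      using D0X fX by (simp add: card_Diff_subset finite_subset)
    moreover have "card D0 \<le> n" unfolding n_def using D0X fX by (simp add: card_mono)
    ultimately show ?thesis using D0(2) by linarith
  qed
  define g where "g k = (if k \<le> r then cf (r - k) i else 0)" for k
  have gz: "k + i \<le> r" if "g k \<noteq> 0" for k
  proof (rule ccontr)
    assume "\<not> k + i \<le> r"
    then have "g k = 0" unfolding g_def cf_def by (simp add: binomial_eq_0)
    then show False using that by simp
  qed
  have fC: "finite Circ" unfolding Circ_def circuits_def
    by (rule finite_subset[of _ "Pow X"]) (use fX in auto)
  have LHS: "coeff (tutte_x1 X rk) i = (\<Sum>A\<in>Pow X. if rk A = card A then g (card A) else 0)"
    unfolding coeff_tutte_x1[OF M]
  proof (rule sum.cong[OF refl])
    fix A assume A: "A \<in> Pow X"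
    show "(if rk A = card A then cf (rk X - rk A) i else 0) = (if rk A = card A then g (card A) else 0)"
    proof (cases "rk A = card A")
      case True
      have "rk A \<le> r" unfolding r_def using m_mono[OF M, of A X] A by blast
      then show ?thesis using True unfolding g_def r_def by simp
    qed simp
  qed
  have per: "(if rk A = card A then g (card A) else 0) = g (card A) - (\<Sum>C\<in>{C\<in>Circ. C \<subseteq> A}. g (card A))"
    if A: "A \<in> Pow X" for A
  proof (cases "g (card A) = 0")
    case True
    then show ?thesis by simp
  next
    case False
    then have "card A + i \<le> r" using gz by blast
    then have cA: "card A < d" using assms(3) unfolding r_def d_def by linarith
    have "{C\<in>Circ. C \<subseteq> A} = {C\<in>circuits X rk. card C < dk X rk 2 \<and> C \<subseteq> A}"
      unfolding Circ_def d_def by blast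
    then have "card {C\<in>Circ. C \<subseteq> A} = (if rk A = card A then 0 else 1)"
      using circ_count[OF M _ cA[unfolded d_def]] A by simp
    then show ?thesis by simp
  qed
  have "coeff (tutte_x1 X rk) i = (\<Sum>A\<in>Pow X. g (card A)) - (\<Sum>A\<in>Pow X. \<Sum>C\<in>{C\<in>Circ. C \<subseteq> A}. g (card A))"
    unfolding LHS sum_subtractf[symmetric] by (rule sum.cong[OF refl]) (rule per)
  also have "(\<Sum>A\<in>Pow X. \<Sum>C\<in>{C\<in>Circ. C \<subseteq> A}. g (card A)) = (\<Sum>C\<in>Circ. \<Sum>A\<in>{A\<in>Pow X. C \<subseteq> A}. g (card A))"
    by (rule sum.swap_restrict) (use fX fC in auto)
  also have "(\<Sum>A\<in>Pow X. g (card A)) = binom (int n - int i - 1) (int r - int i)"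
  proof -
    have "(\<Sum>A\<in>Pow X. g (card A)) = (\<Sum>B\<in>Pow X. if card B \<le> r then cf (r - card B) i else 0)"
      unfolding g_def by simp
    also have "\<dots> = (if i \<le> r then int ((n - 1 - i) choose (r - i)) else 0)"
      unfolding n_def by (rule subset_ident[OF fX]) (use rn in \<open>simp add: n_def\<close>)
    also have "\<dots> = binom (int n - int i - 1) (int r - int i)" using binom_main[OF rn] by simp
    finally show ?thesis .
  qed
  also have "(\<Sum>C\<in>Circ. \<Sum>A\<in>{A\<in>Pow X. C \<subseteq> A}. g (card A))
      = (\<Sum>C\<in>Circ. binom (int n - int (card C) - int i - 1) (int n - int r - 1))"
  proof (rule sum.cong[OF refl])
    fix C assume C: "C \<in> Circ"
    then have Cc: "C \<in> circuits X rk" unfolding Circ_def by blast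
    have CX: "C \<subseteq> X" using Cc unfolding circuits_def by blast
    have fCC: "finite C" using finite_subset[OF CX fX] .
    define c where "c = card C"
    have c1: "c \<le> r + 1" using circ_dep[OF M Cc] m_mono[OF M CX] unfolding c_def r_def
      by (metis add_le_mono1 order_refl)
    have "(\<Sum>A\<in>{A\<in>Pow X. C \<subseteq> A}. g (card A)) = (\<Sum>B\<in>Pow (X - C). g (card B + c))"
    proof (rule sum.reindex_bij_witness[where i = "\<lambda>B. B \<union> C" and j = "\<lambda>A. A - C"])
      fix A assume A: "A \<in> {A\<in>Pow X. C \<subseteq> A}"
      show "A - C \<union> C = A" using A by blast
      show "A - C \<in> Pow (X - C)" using A by blast
      have "finite A" using A fX finite_subset by blast
      moreover have "C \<subseteq> A" using A by blast
      ultimately have "card (A - C) + card C = card A"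
        using card_Diff_subset[OF fCC] card_mono by fastforce
      then show "g (card (A - C) + c) = g (card A)" unfolding c_def by simp
    next
      fix B assume B: "B \<in> Pow (X - C)"
      show "B \<union> C - C = B" using B by blast
      show "B \<union> C \<in> {A\<in>Pow X. C \<subseteq> A}" using B CX by blast
    qed
    also have "\<dots> = binom (int n - int c - int i - 1) (int n - int r - 1)"
    proof (cases "c \<le> r")
      case True
      have "(\<Sum>B\<in>Pow (X - C). g (card B + c)) = (\<Sum>B\<in>Pow (X - C). if card B \<le> r - c then cf ((r - c) - card B) i else 0)"
        by (rule sum.cong[OF refl]) (use True in \<open>auto simp: g_def add.commute\<close>)
      also have "\<dots> = (if i \<le> r - c then int ((card (X - C) - 1 - i) choose (r - c - i)) else 0)"
        by (rule subset_ident) (use fX CX fCC rn True in \<open>auto simp: card_Diff_subset n_def c_def\<close>)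
      also have "card (X - C) = n - c" using CX fCC unfolding n_def c_def by (simp add: card_Diff_subset)
      finally show ?thesis using binom_circ[OF c1 rn, of i] True by (simp add: diff_commute)
    next
      case False
      have "(\<Sum>B\<in>Pow (X - C). g (card B + c)) = 0"
        by (rule sum.neutral) (use False in \<open>auto simp: g_def\<close>)
      then show ?thesis using binom_circ[OF c1 rn, of i] False by simp
    qed
    finally show "(\<Sum>A\<in>{A\<in>Pow X. C \<subseteq> A}. g (card A)) = binom (int n - int (card C) - int i - 1) (int n - int r - 1)"
      unfolding c_def .
  qed
  finally show ?thesis unfolding Circ_def n_def r_def d_def .
qed

end
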